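(* For every $k$ for which the quantities in the context are defined (i.e. $k\le k_{\max}$), $h(v^{(k)})=\min\{h(v): v\in n_0+\mathcal K_k(PAP,b_0),\ \|v\|=1\}$.
   Context: Let $A\in\mathbb{R}^{n\times n}$ be symmetric, $C\in\mathbb{R}^{n\times m}$ ($m<n$) full column rank, $b\in\mathbb{R}^m$, $n_0=C(C^{\top}C)^{-1}b$ with $\|n_0\|<1$, $\gamma=\sqrt{1-\|n_0\|^2}$, $P=I-C(C^{\top}C)^{-1}C^{\top}$ (orthogonal projector onto $\mathcal N(C^{\top})$), $b_0=PAn_0\neq0$, $h(v)=v^{\top}Av$. $\mathcal K_k(PAP,b_0)=\operatorname{span}\{b_0,PAPb_0,\dots,(PAP)^{k-1}b_0\}$. Lanczos process: with $M=PAP$, $q_0=0$, $\beta_1=\|b_0\|$, $q_1=b_0/\|b_0\|$, for $j=1,2,\dots$: $\alpha_j=q_j^{\top}Mq_j$, $\widehat q_{j+1}=Mq_j-\alpha_jq_j-\beta_jq_{j-1}$, $\beta_{j+1}=\|\widehat q_{j+1}\|$, and if $\beta_{j+1}>0$, $q_{j+1}=\widehat q_{j+1}/\beta_{j+1}$; $k_{\max}$ is the smallest $k$ with $\beta_{k+1}=0$. $Q_k=[q_1,\dots,q_k]$ has orthonormal columns spanning $\mathcal K_k(PAP,b_0)$ and $T_k=Q_k^{\top}PAPQ_k$ is tridiagonal. rLGopt: minimize $\lambda$ over $(\lambda,x)\in\mathbb{R}\times\mathbb{R}^k$ with $(T_k-\lambda I)x=-\|b_0\|e_1$ and $\|x\|=\gamma$;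 $(\mu^{(k)},x^{(k)})$ is its minimizer, and $v^{(k)}=n_0+Q_kx^{(k)}$. *)

theory Defs
  imports "HOL-Analysis.Analysis"
begin

definition n0vec :: "real^'m^'n \<Rightarrow> real^'m \<Rightarrow> real^'n" where
  "n0vec C b = C *v (matrix_inv (transpose C ** C) *v b)"

definition gam :: "real^'m^'n \<Rightarrow> real^'m \<Rightarrow> real" where
  "gam C b = sqrt (1 - (norm (n0vec C b))\<^sup>2)"

definition projP :: "real^'m^'n \<Rightarrow> real^'n^'n" where
  "projP C = mat 1 - C ** matrix_inv (transpose C ** C) ** transpose C"

definition b0vec :: "real^'n^'n \<Rightarrow> real^'m^'n \<Rightarrow> real^'m \<Rightarrow> real^'n" where
  "b0vec A C b = projP C *v (A *v n0vec C b)"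

definition hq :: "real^'n^'n \<Rightarrow> real^'n \<Rightarrow> real" where
  "hq A v = v \<bullet> (A *v v)"

definition krylov :: "real^'n^'n \<Rightarrow> real^'n \<Rightarrow> nat \<Rightarrow> (real^'n) set" where
  "krylov M r k = span ((\<lambda>j. (((*v) M) ^^ j) r) ` {..<k})"

text \<open>Lanczos process: lanczos_step M r j = (q_j, q_(j+1), beta_(j+1)).\<close>
fun lanczos_step :: "real^'n^'n \<Rightarrow> real^'n \<Rightarrow> nat \<Rightarrow> (real^'n) \<times> (real^'n) \<times> real" where
  "lanczos_step M r 0 = (0, (1 / norm r) *\<^sub>R r, norm r)"
| "lanczos_step M r (Suc j) =
     (let (qp, q, \<beta>) = lanczos_step M r j;
          \<alpha> = q \<bullet> (M *v q);
          qh = M *v q - \<alpha> *\<^sub>R q - \<beta> *\<^sub>R qp;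
          \<beta>' = norm qh
      in (q, (1 / \<beta>') *\<^sub>R qh, \<beta>'))"

fun lq :: "real^'n^'n \<Rightarrow> real^'n \<Rightarrow> nat \<Rightarrow> real^'n" where
  "lq M r 0 = 0"
| "lq M r (Suc j) = fst (snd (lanczos_step M r j))"

fun lbeta :: "real^'n^'n \<Rightarrow> real^'n \<Rightarrow> nat \<Rightarrow> real" where
  "lbeta M r 0 = 0"
| "lbeta M r (Suc j) = snd (snd (lanczos_step M r j))"

definition kmax :: "real^'n^'n \<Rightarrow> real^'n \<Rightarrow> nat" where
  "kmax M r = (LEAST k. lbeta M r (Suc k) = 0)"

text \<open>Q_k x = sum_{j=1..k} x_j q_j, for x in R^k represented by its coordinates x 1, ..., x k\<close>
definition Qmul :: "real^'n^'n \<Rightarrow> real^'n \<Rightarrow> nat \<Rightarrow> (nat \<Rightarrow> real) \<Rightarrow> real^'n" where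
  "Qmul M r k x = (\<Sum>j=1..k. x j *\<^sub>R lq M r j)"

text \<open>T_k = Q_k^T M Q_k, entry (i,j) = q_i^T M q_j for 1 <= i,j <= k\<close>
definition Tent :: "real^'n^'n \<Rightarrow> real^'n \<Rightarrow> nat \<Rightarrow> nat \<Rightarrow> real" where
  "Tent M r i j = lq M r i \<bullet> (M *v lq M r j)"

definition rLG_feasible :: "real^'n^'n \<Rightarrow> real^'n \<Rightarrow> real \<Rightarrow> nat \<Rightarrow> real \<Rightarrow> (nat \<Rightarrow> real) \<Rightarrow> bool" where
  "rLG_feasible M r g k lam x \<longleftrightarrow>
     (\<forall>i\<in>{1..k}. (\<Sum>j=1..k. Tent M r i j * x j) - lam * x i = - norm r * (if i = 1 then 1 else 0))
     \<and> sqrt (\<Sum>j=1..k. (x j)\<^sup>2) = g"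

definition rLG_minimizer :: "real^'n^'n \<Rightarrow> real^'n \<Rightarrow> real \<Rightarrow> nat \<Rightarrow> real \<Rightarrow> (nat \<Rightarrow> real) \<Rightarrow> bool" where
  "rLG_minimizer M r g k \<mu> x \<longleftrightarrow>
     rLG_feasible M r g k \<mu> x \<and> (\<forall>lam y. rLG_feasible M r g k lam y \<longrightarrow> \<mu> \<le> lam)"

end

theory Submission
  imports Defs
begin



declare transpose_matrix_vector[simp del]

lemma dot_mv: "x \<bullet> (A *v y) = (transpose A *v x) \<bullet> (y::real^'n)"
  by (simp add: dot_lmul_matrix[symmetric] transpose_matrix_vector)

lemma CtC_inv:
  fixes C :: "real^'m^'n"
  assumes rankC: "rank C = CARD('m)"
  shows "(transpose C ** C) ** matrix_inv (transpose C ** C) = mat 1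
       \<and> matrix_inv (transpose C ** C) ** (transpose C ** C) = mat 1"
proof -
  have inj: "inj ((*v) C)" using rankC full_rank_injective by blast
  have "\<forall>v. (transpose C ** C) *v v = 0 \<longrightarrow> v = 0"
  proof (intro allI impI)
    fix v :: "real^'m" assume "(transpose C ** C) *v v = 0"
    then have "v \<bullet> (transpose C *v (C *v v)) = 0" by (simp only: matrix_vector_mul_assoc inner_zero_right)
    then have "(C *v v) \<bullet> (C *v v) = 0" using dot_mv[of v "transpose C" "C *v v"] by (simp add: inner_commute)
    then have "C *v v = C *v 0" by simp
    then show "v = 0" using inj by (meson injD)
  qed
  then have "\<exists>B. B ** (transpose C ** C) = mat 1" using matrix_left_invertible_ker by blast
  then have "invertible (transpose C ** C)" using invertible_left_inverse by blast
  then have "\<exists>A'. (transpose C ** C) ** A' = mat 1 \<and> A' ** (transpose C ** C) = mat 1"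
    by (simp add: invertible_def)
  then show ?thesis unfolding matrix_inv_def by (rule someI_ex)
qed

locale PC =
  fixes C :: "real^'m^'n" and A :: "real^'n^'n" and b :: "real^'m"
  assumes rankC: "rank C = CARD('m)" and symA: "transpose A = A"
begin

definition "G = matrix_inv (transpose C ** C)"

lemma SG: "(transpose C ** C) ** G = mat 1" and GS: "G ** (transpose C ** C) = mat 1"
  using CtC_inv[OF rankC] by (auto simp: G_def)

lemma Gsym: "transpose G = G"
proof -
  have tS: "transpose (transpose C ** C) = transpose C ** C"
    by (simp add: matrix_transpose_mul)
  have "transpose G ** (transpose C ** C) = mat 1"
  proof -
    have "transpose G ** (transpose C ** C) = transpose G ** transpose (transpose C ** C)"
      using tS by simp
    also have "\<dots> = transpose ((transpose C ** C) ** G)" by (simp only: matrix_transpose_mul)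
    also have "\<dots> = mat 1" by (simp only: SG transpose_mat)
    finally show ?thesis .
  qed
  then have "transpose G = transpose G ** ((transpose C ** C) ** G)" 
    using SG by (simp add: matrix_mul_rid)
  also have "\<dots> = (transpose G ** (transpose C ** C)) ** G" by (simp add: matrix_mul_assoc)
  also have "\<dots> = G" using \<open>transpose G ** (transpose C ** C) = mat 1\<close> by (simp add: matrix_mul_lid)
  finally show ?thesis .
qed

lemma P_apply: "projP C *v v = v - C *v (G *v (transpose C *v v))"
proof -
  have "projP C *v v = v - (C ** G ** transpose C) *v v"
    by (simp add: projP_def G_def matrix_vector_mult_diff_rdistrib)
  also have "(C ** G ** transpose C) *v v = C *v (G *v (transpose C *v v))"
    by (simp only: matrix_vector_mul_assoc matrix_mul_assoc)
  finally show ?thesis .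
qed

lemma S_apply: "transpose C *v (C *v (G *v u)) = u"
  by (metis SG matrix_vector_mul_assoc matrix_vector_mul_lid)

lemma Ct_P: "transpose C *v (projP C *v v) = 0"
  by (simp add: P_apply matrix_vector_mult_diff_distrib S_apply)

lemma PP: "projP C *v (projP C *v v) = projP C *v v"
  by (subst (1) P_apply) (simp add: Ct_P)

lemma Psym: "u \<bullet> (projP C *v v) = (projP C *v u) \<bullet> v"
proof -
  have "u \<bullet> (C *v (G *v (transpose C *v v))) = (transpose C *v u) \<bullet> (G *v (transpose C *v v))"
    by (rule dot_mv)
  also have "\<dots> = (G *v (transpose C *v u)) \<bullet> (transpose C *v v)"
    using dot_mv[of "transpose C *v u" G "transpose C *v v"] by (simp only: Gsym)
  also have "\<dots> = v \<bullet> (C *v (G *v (transpose C *v u)))"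
    using dot_mv[of v C "G *v (transpose C *v u)"] by (simp only: transpose_transpose inner_commute)
  finally have e: "u \<bullet> (C *v (G *v (transpose C *v v))) = (C *v (G *v (transpose C *v u))) \<bullet> v"
    by (simp only: inner_commute)
  show ?thesis unfolding P_apply by (simp only: inner_diff_left inner_diff_right e inner_commute)
qed

lemma Pn0: "projP C *v n0vec C b = 0"
  by (simp add: P_apply n0vec_def G_def[symmetric] S_apply)

lemma Asym: "u \<bullet> (A *v v) = (A *v u) \<bullet> v"
  using dot_mv[of u A v] by (simp only: symA)

end



lemma step_fst: "fst (lanczos_step M r j) = lq M r j"
  by (induction j) (auto simp: Let_def split: prod.split)

lemma step_eq: "lanczos_step M r j = (lq M r j, lq M r (Suc j), lbeta M r (Suc j))"
proof -
  have "lanczos_step M r j = (fst (lanczos_step M r j), fst (snd (lanczos_step M r j)), snd (snd (lanczos_step M r j)))"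
    by simp
  then show ?thesis by (simp only: step_fst lq.simps(2)[symmetric] lbeta.simps(2)[symmetric])
qed

lemma q1: "lq M r (Suc 0) = (1 / norm r) *\<^sub>R r" and b1: "lbeta M r (Suc 0) = norm r"
  by auto

declare lq.simps(2)[simp del] lbeta.simps(2)[simp del]

definition qh :: "real^'n^'n \<Rightarrow> real^'n \<Rightarrow> nat \<Rightarrow> real^'n" where
  "qh M r j = M *v lq M r (Suc j) - (lq M r (Suc j) \<bullet> (M *v lq M r (Suc j))) *\<^sub>R lq M r (Suc j)
      - lbeta M r (Suc j) *\<^sub>R lq M r j"

lemma qSS: "lq M r (Suc (Suc j)) = (1 / lbeta M r (Suc (Suc j))) *\<^sub>R qh M r j"
  and bSS: "lbeta M r (Suc (Suc j)) = norm (qh M r j)"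
  by (simp_all only: lq.simps(2) lbeta.simps(2) lanczos_step.simps(2)) (simp_all add: step_eq Let_def qh_def)

lemma rec0: "lbeta M r (Suc 0) *\<^sub>R lq M r (Suc 0) = r"
  by (cases "r = 0") (auto simp: q1 b1)

lemma recS: "lbeta M r (Suc (Suc j)) *\<^sub>R lq M r (Suc (Suc j)) = qh M r j"
  by (cases "qh M r j = 0") (auto simp: qSS bSS)

lemma qnorm: "lbeta M r (Suc j) \<noteq> 0 \<Longrightarrow> norm (lq M r (Suc j)) = 1"
  by (cases j) (auto simp: qSS bSS q1 b1)

lemma Mq: "M *v lq M r (Suc j) = lbeta M r (Suc (Suc j)) *\<^sub>R lq M r (Suc (Suc j))
   + (lq M r (Suc j) \<bullet> (M *v lq M r (Suc j))) *\<^sub>R lq M r (Suc j) + lbeta M r (Suc j) *\<^sub>R lq M r j"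
  by (simp add: recS qh_def)

lemma krylov_mono: "j \<le> j' \<Longrightarrow> krylov M r j \<subseteq> krylov M r j'"
  unfolding krylov_def by (intro span_mono image_mono) auto

lemma krylov_M: "y \<in> krylov M r j \<Longrightarrow> M *v y \<in> krylov M r (Suc j)"
proof -
  assume y: "y \<in> krylov M r j"
  have "M *v y \<in> (*v) M ` krylov M r j" using y by blast
  also have "\<dots> = span ((*v) M ` ((\<lambda>i. (((*v) M) ^^ i) r) ` {..<j}))"
    unfolding krylov_def by (rule linear_span_image[symmetric]) (rule matrix_vector_mul_linear)
  also have "\<dots> \<subseteq> krylov M r (Suc j)"
    unfolding krylov_def
  proof (intro span_mono subsetI)
    fix z assume "z \<in> (*v) M ` (\<lambda>i. ((*v) M ^^ i) r) ` {..<j}"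
    then obtain i where "i < j" "z = M *v (((*v) M ^^ i) r)" by auto
    then have "z = (((*v) M) ^^ Suc i) r" "Suc i < Suc j" by auto
    then show "z \<in> (\<lambda>i. ((*v) M ^^ i) r) ` {..<Suc j}" by blast
  qed
  finally show ?thesis .
qed

lemma r_in_krylov: "r \<in> krylov M r (Suc 0)"
  unfolding krylov_def by (rule span_base) force

lemma q_in_krylov_aux: "lq M r j \<in> krylov M r j \<and> lq M r (Suc j) \<in> krylov M r (Suc j)"
proof (induction j)
  case 0
  then show ?case using r_in_krylov[where M=M and r=r] by (auto simp: q1 span_zero krylov_def intro: span_scale)
next
  case (Suc j)
  have a: "lq M r (Suc j) \<in> krylov M r (Suc (Suc j))"
    using Suc krylov_mono[where j="Suc j" and j'="Suc (Suc j)" and M=M and r=r] by auto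
  have b: "lq M r j \<in> krylov M r (Suc (Suc j))"
    using Suc krylov_mono[where j="j" and j'="Suc (Suc j)" and M=M and r=r] by auto
  have c: "M *v lq M r (Suc j) \<in> krylov M r (Suc (Suc j))"
    using Suc krylov_M by blast
  have "qh M r j \<in> krylov M r (Suc (Suc j))"
    unfolding qh_def krylov_def
    using a b c unfolding krylov_def by (intro span_diff span_scale) auto
  then have "lq M r (Suc (Suc j)) \<in> krylov M r (Suc (Suc j))"
    unfolding qSS krylov_def by (intro span_scale)
  then show ?case using Suc by auto
qed

lemma q_in_krylov: "lq M r j \<in> krylov M r j"
  using q_in_krylov_aux by blast

lemma Mq_in: "l \<le> i \<Longrightarrow> M *v lq M r (Suc l) \<in> span (lq M r ` {1..Suc (Suc i)})"
proof -
  assume l: "l \<le> i"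
  have A: "lq M r (Suc (Suc l)) \<in> span (lq M r ` {1..Suc (Suc i)})"
    using l by (intro span_base) auto
  have B: "lq M r (Suc l) \<in> span (lq M r ` {1..Suc (Suc i)})"
    using l by (intro span_base) auto
  have C: "lq M r l \<in> span (lq M r ` {1..Suc (Suc i)})"
  proof (cases l)
    case 0 then show ?thesis by (simp add: span_zero)
  next
    case (Suc l') then show ?thesis using l by (intro span_base) auto
  qed
  show ?thesis by (subst Mq) (intro span_add span_scale A B C)
qed

lemma krylov_gen_in: "(((*v) M) ^^ i) r \<in> span (lq M r ` {1..Suc i})"
proof (induction i)
  case 0
  have "r = lbeta M r (Suc 0) *\<^sub>R lq M r (Suc 0)" by (simp only: rec0)
  also have "\<dots> \<in> span (lq M r ` {1..Suc 0})" by (intro span_scale span_base) auto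
  finally show ?case by simp
next
  case (Suc i)
  let ?S = "span (lq M r ` {1..Suc (Suc i)})"
  have "\<forall>y\<in>span (lq M r ` {1..Suc i}). M *v y \<in> ?S"
  proof
    fix y assume "y \<in> span (lq M r ` {1..Suc i})"
    then show "M *v y \<in> ?S"
    proof (induction rule: span_induct_alt)
      show "M *v 0 \<in> ?S" by (simp add: span_zero)
    next
      fix c x y assume h2: "x \<in> lq M r ` {1..Suc i}" "M *v y \<in> ?S"
      then obtain l where l: "l \<in> {1..Suc i}" "x = lq M r l" by auto
      then obtain l' where "l = Suc l'" "l' \<le> i" by (cases l) auto
      then have "M *v x \<in> ?S" using l Mq_in by auto
      then show "M *v (c *\<^sub>R x + y) \<in> ?S" using h2 by (simp add: matrix_vector_right_distrib matrix_vector_mult_scaleR span_add span_scale)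
    qed
  qed
  then show ?case using Suc by simp
qed

lemma krylov_sub: "krylov M r k \<subseteq> span (lq M r ` {1..k})"
  unfolding krylov_def
proof (rule span_minimal)
  show "subspace (span (lq M r ` {1..k}))" by (rule subspace_span)
  show "(\<lambda>j. ((*v) M ^^ j) r) ` {..<k} \<subseteq> span (lq M r ` {1..k})"
  proof
    fix z assume "z \<in> (\<lambda>j. ((*v) M ^^ j) r) ` {..<k}"
    then obtain i where i: "i < k" "z = ((*v) M ^^ i) r" by auto
    have "span (lq M r ` {1..Suc i}) \<subseteq> span (lq M r ` {1..k})"
      using i by (intro span_mono image_mono) auto
    then show "z \<in> span (lq M r ` {1..k})" using krylov_gen_in i by blast
  qed
qed

lemma span_q_sub: "span (lq M r ` {1..k}) \<subseteq> krylov M r k"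
proof (rule span_minimal)
  show "subspace (krylov M r k)" unfolding krylov_def by (rule subspace_span)
  show "lq M r ` {1..k} \<subseteq> krylov M r k"
    using q_in_krylov krylov_mono by fastforce
qed

lemma krylov_eq: "krylov M r k = span (lq M r ` {1..k})"
  using krylov_sub span_q_sub by blast




lemma symM_dot: "transpose M = M \<Longrightarrow> u \<bullet> (M *v v) = (M *v u) \<bullet> (v::real^'n)"
  using dot_mv[of u M v] by simp

lemma q_self: "lbeta M r (Suc j) \<noteq> 0 \<Longrightarrow> lq M r (Suc j) \<bullet> lq M r (Suc j) = 1"
  using qnorm[of M r j] by (simp add: power2_norm_eq_inner[symmetric])

lemma orth:
  assumes symM: "transpose M = M" and nz: "\<forall>j. 1 \<le> j \<and> j \<le> k \<longrightarrow> lbeta M r j \<noteq> 0"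
  shows "b \<le> k \<Longrightarrow> a < b \<Longrightarrow> lq M r a \<bullet> lq M r b = 0"
proof (induction b arbitrary: a rule: less_induct)
  case (less b)
  show ?case
  proof (cases a)
    case 0 then show ?thesis by simp
  next
    case (Suc c)
    with less.prems obtain j where bj: "b = Suc (Suc j)" and cj: "c \<le> j"
      by (cases b; cases "b - 1") auto
    let ?q = "lq M r" and ?\<beta> = "lbeta M r"
    have IH: "\<And>a' b'. b' < b \<Longrightarrow> a' < b' \<Longrightarrow> ?q a' \<bullet> ?q b' = 0"
      using less.IH less.prems by auto
    have bnz: "?\<beta> (Suc (Suc j)) \<noteq> 0" using nz less.prems bj by auto
    have bnz1: "?\<beta> (Suc j) \<noteq> 0" using nz less.prems bj by auto
    have key: "?\<beta> (Suc (Suc j)) * (?q a \<bullet> ?q (Suc (Suc j))) =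
       ?q a \<bullet> (M *v ?q (Suc j)) - (?q (Suc j) \<bullet> (M *v ?q (Suc j))) * (?q a \<bullet> ?q (Suc j))
        - ?\<beta> (Suc j) * (?q a \<bullet> ?q j)"
    proof -
      have "?\<beta> (Suc (Suc j)) * (?q a \<bullet> ?q (Suc (Suc j))) = ?q a \<bullet> (?\<beta> (Suc (Suc j)) *\<^sub>R ?q (Suc (Suc j)))"
        by simp
      also have "\<dots> = ?q a \<bullet> qh M r j" by (simp only: recS)
      finally show ?thesis by (simp add: qh_def inner_diff_right)
    qed
    show ?thesis
    proof (cases "c = j")
      case True
      have "?q a \<bullet> ?q (Suc j) = 1" using True Suc q_self[OF bnz1] by simp
      moreover have "?q a \<bullet> ?q j = 0" using IH[of "Suc j" j] True Suc bj by (simp add: inner_commute)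
      ultimately have "?\<beta> (Suc (Suc j)) * (?q a \<bullet> ?q (Suc (Suc j))) = 0"
        using key True Suc by simp
      then show ?thesis using bnz bj by simp
    next
      case False
      then have cj': "c < j" using cj by simp
      have e1: "?q a \<bullet> ?q (Suc j) = 0" using IH[of "Suc j" a] Suc cj' bj by simp
      have e2: "?q (Suc c) \<bullet> ?q (Suc j) = 0" using IH[of "Suc j" "Suc c"] cj' bj by simp
      have e3: "?q c \<bullet> ?q (Suc j) = 0" using IH[of "Suc j" c] cj' bj by simp
      have "?q a \<bullet> (M *v ?q (Suc j)) = (M *v ?q (Suc c)) \<bullet> ?q (Suc j)"
        using symM_dot[OF symM] Suc by simp
      also have "\<dots> = ?\<beta> (Suc (Suc c)) * (?q (Suc (Suc c)) \<bullet> ?q (Suc j))"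
        by (subst Mq) (simp add: inner_add_left e2 e3)
      finally have m: "?q a \<bullet> (M *v ?q (Suc j)) = ?\<beta> (Suc (Suc c)) * (?q (Suc (Suc c)) \<bullet> ?q (Suc j))" .
      show ?thesis
      proof (cases "Suc c = j")
        case True
        have "?q (Suc (Suc c)) \<bullet> ?q (Suc j) = 1" using True q_self[OF bnz1] by simp
        moreover have "?q a \<bullet> ?q j = 1"
        proof -
          have "?\<beta> (Suc c) \<noteq> 0" using nz less.prems bj True by auto
          then show ?thesis using True Suc q_self[of M r c] by simp
        qed
        ultimately have "?\<beta> (Suc (Suc j)) * (?q a \<bullet> ?q (Suc (Suc j))) = 0"
          using key m e1 True by simp
        then show ?thesis using bnz bj by simp
      next
        case False
        have "?q (Suc (Suc c)) \<bullet> ?q (Suc j) = 0" using IH[of "Suc j" "Suc (Suc c)"] False cj' bj by simp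
        moreover have "?q a \<bullet> ?q j = 0" using IH[of j a] False cj' bj Suc by simp
        ultimately have "?\<beta> (Suc (Suc j)) * (?q a \<bullet> ?q (Suc (Suc j))) = 0"
          using key m e1 by simp
        then show ?thesis using bnz bj by simp
      qed
    qed
  qed
qed

lemma orthonormal:
  assumes symM: "transpose M = M" and nz: "\<forall>j. 1 \<le> j \<and> j \<le> k \<longrightarrow> lbeta M r j \<noteq> 0"
    and a: "1 \<le> a" "a \<le> k" and b: "1 \<le> b" "b \<le> k"
  shows "lq M r a \<bullet> lq M r b = (if a = b then 1 else 0)"
proof -
  consider "a < b" | "a = b" | "b < a" by linarith
  then show ?thesis
  proof cases
    case 1 then show ?thesis using orth[OF symM nz] b by auto
  next
    case 2
    then obtain j where "a = Suc j" using a by (cases a) auto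
    then show ?thesis using q_self[of M r j] nz a 2 by auto
  next
    case 3 then show ?thesis using orth[OF symM nz, of a b] a by (auto simp: inner_commute)
  qed
qed




lemma norm_from_inner: "x \<bullet> x = g\<^sup>2 \<Longrightarrow> 0 \<le> g \<Longrightarrow> norm x = (g::real)"
  by (simp add: norm_eq_sqrt_inner)

lemma F_diff:
  fixes M :: "real^'n^'n"
  assumes sym: "\<forall>u v. u \<bullet> (M *v v) = v \<bullet> (M *v u)"
  shows "(ws+e) \<bullet> (M *v (ws+e)) + 2*((ws+e) \<bullet> r) - (ws \<bullet> (M *v ws) + 2*(ws \<bullet> r))
     = e \<bullet> (M *v e) + 2*(e \<bullet> (M *v ws + r))"
proof -
  have "ws \<bullet> (M *v e) = e \<bullet> (M *v ws)" using sym by blast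
  then show ?thesis
    by (simp add: matrix_vector_right_distrib inner_add_left inner_add_right algebra_simps)
qed

lemma neg_div: "(a::real) < 0 \<Longrightarrow> 0 \<le> a * X \<Longrightarrow> X \<le> 0"
  by (simp add: zero_le_mult_iff)

lemma trs_main:
  fixes M :: "real^'n^'n" and V :: "(real^'n) set" and r X w :: "real^'n" and \<gamma> \<mu> :: real
  assumes V: "subspace V" and symM: "transpose M = M" and g: "\<gamma> > 0"
    and XV: "X \<in> V" and Xn: "norm X = \<gamma>" and Xk: "\<forall>z\<in>V. z \<bullet> (M *v X - \<mu> *\<^sub>R X + r) = 0"
    and minl: "\<forall>lam y. y \<in> V \<and> norm y = \<gamma> \<and> (\<forall>z\<in>V. z \<bullet> (M *v y - lam *\<^sub>R y + r) = 0) \<longrightarrow> \<mu> \<le> lam"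
    and wV: "w \<in> V" and wn: "norm w = \<gamma>"
  shows "X \<bullet> (M *v X) + 2 * (X \<bullet> r) \<le> w \<bullet> (M *v w) + 2 * (w \<bullet> r)"
proof -
  have sym: "\<forall>u v. u \<bullet> (M *v v) = v \<bullet> (M *v u)"
    using symM_dot[OF symM] by (simp add: inner_commute)
  define F where "F y = y \<bullet> (M *v y) + 2 * (y \<bullet> r)" for y
  define K where "K = V \<inter> sphere 0 \<gamma>"
  have cK: "compact K" unfolding K_def
    by (rule closed_Int_compact[OF closed_subspace[OF V] compact_sphere])
  have XK: "X \<in> K" using XV Xn by (simp add: K_def)
  have cont: "continuous_on K F" unfolding F_def
    by (intro continuous_intros matrix_vector_mult_linear_continuous_on)
  obtain ws where wsK: "ws \<in> K" and wsmin: "\<forall>y\<in>K. F ws \<le> F y"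
    using continuous_attains_inf[OF cK _ cont] XK by blast
  have wsV: "ws \<in> V" and wsn: "norm ws = \<gamma>" using wsK by (auto simp: K_def)
  have wsws: "ws \<bullet> ws = \<gamma>\<^sup>2" using wsn by (simp add: power2_norm_eq_inner[symmetric])
  define \<rho> where "\<rho> = M *v ws + r"
  have Fmin: "0 \<le> e \<bullet> (M *v e) + 2 * (e \<bullet> \<rho>)" if "ws + e \<in> V" "norm (ws + e) = \<gamma>" for e
  proof -
    have "F ws \<le> F (ws + e)" using wsmin that by (auto simp: K_def)
    then show ?thesis using F_diff[OF sym, of ws e r] by (simp add: F_def \<rho>_def)
  qed
  obtain Kb where Kb: "Kb > 0" "\<forall>x. norm (M *v x) \<le> norm x * Kb"
    using bounded_linear.pos_bounded[OF matrix_vector_mul_bounded_linear] by blast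
  have quadb: "\<bar>z \<bullet> (M *v z)\<bar> \<le> Kb * (z \<bullet> z)" for z
  proof -
    have "\<bar>z \<bullet> (M *v z)\<bar> \<le> norm z * norm (M *v z)" by (rule Cauchy_Schwarz_ineq2)
    also have "\<dots> \<le> norm z * (norm z * Kb)" using Kb by (simp add: mult_left_mono)
    also have "\<dots> = Kb * (z \<bullet> z)" by (simp add: power2_norm_eq_inner[symmetric] power2_eq_square)
    finally show ?thesis .
  qed
  have first: "u \<bullet> \<rho> = 0" if uV: "u \<in> V" and uws: "u \<bullet> ws = 0" for u
  proof (rule ccontr)
    assume cne: "u \<bullet> \<rho> \<noteq> 0"
    define c where "c = u \<bullet> \<rho>"
    define s where "s = ws \<bullet> \<rho>"
    define t where "t = (\<gamma>\<^sup>2 * Kb + \<bar>s\<bar> + 1) / c"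
    define z where "z = ws + t *\<^sub>R u"
    define nz where "nz = z \<bullet> z"
    have nz_eq: "nz = \<gamma>\<^sup>2 + t\<^sup>2 * (u \<bullet> u)"
      unfolding nz_def z_def using uws wsws
      by (simp add: inner_add_left inner_add_right inner_commute power2_eq_square)
    have nzpos: "nz > 0" using nz_eq g by (simp add: add_pos_nonneg)
    define a where "a = - 2 * \<gamma>\<^sup>2 / nz"
    have aneg: "a < 0" using nzpos g by (simp add: a_def)
    have anz: "a * nz = - 2 * \<gamma>\<^sup>2" using nzpos by (simp add: a_def)
    have zws: "ws \<bullet> z = \<gamma>\<^sup>2" unfolding z_def using uws wsws by (simp add: inner_add_right inner_commute)
    have inV: "ws + a *\<^sub>R z \<in> V" unfolding z_def
      using V wsV uV by (intro subspace_add subspace_scale) auto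
    have "(ws + a *\<^sub>R z) \<bullet> (ws + a *\<^sub>R z) = \<gamma>\<^sup>2 + 2 * a * (ws \<bullet> z) + a * (a * nz)"
      unfolding nz_def using wsws by (simp add: inner_add_left inner_add_right inner_commute algebra_simps power2_eq_square)
    also have "\<dots> = \<gamma>\<^sup>2" using zws anz by simp
    finally have "norm (ws + a *\<^sub>R z) = \<gamma>" using g by (intro norm_from_inner) auto
    then have "0 \<le> (a *\<^sub>R z) \<bullet> (M *v (a *\<^sub>R z)) + 2 * ((a *\<^sub>R z) \<bullet> \<rho>)" using Fmin inV by blast
    then have h: "0 \<le> a * (a * (z \<bullet> (M *v z)) + 2 * (z \<bullet> \<rho>))"
      by (simp add: matrix_vector_mult_scaleR algebra_simps)
    have h2: "a * (z \<bullet> (M *v z)) + 2 * (z \<bullet> \<rho>) \<le> 0" using neg_div[OF aneg h] .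
    have zr: "z \<bullet> \<rho> = s + t * c" unfolding z_def s_def c_def by (simp add: inner_add_left)
    have "\<bar>a * (z \<bullet> (M *v z))\<bar> \<le> \<bar>a\<bar> * (Kb * nz)"
      unfolding nz_def abs_mult using quadb by (intro mult_left_mono) auto
    also have "\<dots> = 2 * \<gamma>\<^sup>2 * Kb" using anz aneg by (simp add: abs_if algebra_simps)
    finally have h3: "- (2 * \<gamma>\<^sup>2 * Kb) \<le> a * (z \<bullet> (M *v z))" by linarith
    have tc: "t * c = \<gamma>\<^sup>2 * Kb + \<bar>s\<bar> + 1" using cne by (simp add: t_def c_def)
    show False using h2 h3 zr tc abs_ge_minus_self[of s] by linarith
  qed
  define lam where "lam = (ws \<bullet> \<rho>) / \<gamma>\<^sup>2"
  have kkt: "\<forall>z\<in>V. z \<bullet> (M *v ws - lam *\<^sub>R ws + r) = 0"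
  proof
    fix z assume zV: "z \<in> V"
    define u where "u = z - ((z \<bullet> ws) / \<gamma>\<^sup>2) *\<^sub>R ws"
    have uV: "u \<in> V" unfolding u_def using V zV wsV by (intro subspace_diff subspace_scale) auto
    have "u \<bullet> ws = 0" unfolding u_def using wsws g by (simp add: inner_diff_left)
    then have "u \<bullet> \<rho> = 0" using first uV by blast
    then have "z \<bullet> \<rho> - ((z \<bullet> ws) / \<gamma>\<^sup>2) * (ws \<bullet> \<rho>) = 0" unfolding u_def
      by (simp only: inner_diff_left inner_scaleR_left)
    then have "z \<bullet> \<rho> = lam * (z \<bullet> ws)" unfolding lam_def by (simp add: field_simps)
    then show "z \<bullet> (M *v ws - lam *\<^sub>R ws + r) = 0"
      unfolding \<rho>_def by (simp add: inner_diff_right inner_add_right)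
  qed
  have mu_le: "\<mu> \<le> lam" using minl wsV wsn kkt by blast
  define Q where "Q z = z \<bullet> (M *v z) - lam * (z \<bullet> z)" for z
  have zr_kkt: "z \<bullet> \<rho> = lam * (z \<bullet> ws)" if "z \<in> V" for z
    using kkt that unfolding \<rho>_def by (auto simp: inner_diff_right inner_add_right)
  have sec1: "0 \<le> Q z" if zV: "z \<in> V" and zw: "z \<bullet> ws \<noteq> 0" for z
  proof -
    have zz: "z \<bullet> z \<noteq> 0" using zw by auto
    define a where "a = - 2 * (z \<bullet> ws) / (z \<bullet> z)"
    have az: "a * (z \<bullet> z) = - 2 * (z \<bullet> ws)" using zz by (simp add: a_def)
    have ane: "a \<noteq> 0" using zw zz by (simp add: a_def)
    have inV: "ws + a *\<^sub>R z \<in> V" using V wsV zV by (intro subspace_add subspace_scale) auto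
    have "(ws + a *\<^sub>R z) \<bullet> (ws + a *\<^sub>R z) = \<gamma>\<^sup>2 + a * (2 * (z \<bullet> ws) + a * (z \<bullet> z))"
      using wsws by (simp add: inner_add_left inner_add_right inner_commute algebra_simps power2_eq_square)
    also have "\<dots> = \<gamma>\<^sup>2" using az by simp
    finally have "norm (ws + a *\<^sub>R z) = \<gamma>" using g by (intro norm_from_inner) auto
    then have "0 \<le> (a *\<^sub>R z) \<bullet> (M *v (a *\<^sub>R z)) + 2 * ((a *\<^sub>R z) \<bullet> \<rho>)" using Fmin inV by blast
    then have "0 \<le> a * a * (z \<bullet> (M *v z)) + a * (2 * (z \<bullet> \<rho>))"
      by (simp add: matrix_vector_mult_scaleR algebra_simps)
    also have "a * (2 * (z \<bullet> \<rho>)) = - a * a * lam * (z \<bullet> z)"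
    proof -
      have "a * (2 * (z \<bullet> \<rho>)) = lam * a * (2 * (z \<bullet> ws))" using zr_kkt[OF zV] by simp
      also have "2 * (z \<bullet> ws) = - (a * (z \<bullet> z))" using az by simp
      finally show ?thesis by (simp add: algebra_simps)
    qed
    finally have "0 \<le> (a * a) * Q z" by (simp add: Q_def algebra_simps)
    moreover have "a * a > 0" using ane not_real_square_gt_zero by blast
    ultimately show ?thesis by (simp add: zero_le_mult_iff)
  qed
  have quadexp: "(x + c *\<^sub>R y) \<bullet> (M *v (x + c *\<^sub>R y)) = x \<bullet> (M *v x) + 2 * c * (y \<bullet> (M *v x)) + c\<^sup>2 * (y \<bullet> (M *v y))" for x y c
  proof -
    have "x \<bullet> (M *v y) = y \<bullet> (M *v x)" using sym by blast
    then show ?thesis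
      by (simp add: matrix_vector_right_distrib matrix_vector_mult_scaleR inner_add_left inner_add_right
          power2_eq_square algebra_simps)
  qed
  have normexp: "(x + c *\<^sub>R y) \<bullet> (x + c *\<^sub>R y) = x \<bullet> x + 2 * c * (x \<bullet> y) + c\<^sup>2 * (y \<bullet> y)" for x y :: "real^'n" and c
    by (simp add: inner_add_left inner_add_right inner_commute power2_eq_square algebra_simps)
  have Qexp: "Q (z + s *\<^sub>R ws) + Q (z - s *\<^sub>R ws) = 2 * Q z + 2 * s\<^sup>2 * Q ws" for z s
  proof -
    have m: "z - s *\<^sub>R ws = z + (- s) *\<^sub>R ws" by simp
    show ?thesis unfolding Q_def m quadexp normexp by (simp add: algebra_simps)
  qed
  have second: "0 \<le> Q z" if zV: "z \<in> V" for z
  proof (cases "z \<bullet> ws = 0")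
    case False then show ?thesis using sec1 zV by blast
  next
    case True
    have bnd: "- (s\<^sup>2 * Q ws) \<le> Q z" if s: "s > 0" for s
    proof -
      have "(z + s *\<^sub>R ws) \<bullet> ws \<noteq> 0" "(z - s *\<^sub>R ws) \<bullet> ws \<noteq> 0"
        using True wsws g s by (simp_all add: inner_add_left inner_diff_left)
      moreover have "z + s *\<^sub>R ws \<in> V" "z - s *\<^sub>R ws \<in> V" using V zV wsV
        by (auto intro: subspace_add subspace_diff subspace_scale)
      ultimately have "0 \<le> Q (z + s *\<^sub>R ws)" "0 \<le> Q (z - s *\<^sub>R ws)" using sec1 by blast+
      then show ?thesis using Qexp[of z s] by linarith
    qed
    show ?thesis
    proof (rule ccontr)
      assume neg: "\<not> 0 \<le> Q z"
      show False
      proof (cases "Q ws \<le> 0")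
        case True then show False using bnd[of 1] neg by simp
      next
        case False
        define s where "s = sqrt (- Q z / (2 * Q ws))"
        have nn: "0 \<le> - Q z / (2 * Q ws)" using neg False by (intro divide_nonneg_pos) auto
        have s2: "s\<^sup>2 = - Q z / (2 * Q ws)" unfolding s_def using nn by simp
        have "0 < - Q z / (2 * Q ws)" using neg False by (intro divide_pos_pos) auto
        then have "s > 0" unfolding s_def by simp
        then have "- (s\<^sup>2 * Q ws) \<le> Q z" by (rule bnd)
        then show False using s2 False neg by (simp add: field_simps)
      qed
    qed
  qed
  define d where "d = w - X"
  have dV: "d \<in> V" unfolding d_def using V wV XV by (rule subspace_diff)
  have k1: "w \<bullet> (M *v X) - \<mu> * (w \<bullet> X) + w \<bullet> r = 0"
    using Xk wV by (auto simp: inner_diff_right inner_add_right)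
  have k2: "X \<bullet> (M *v X) - \<mu> * (X \<bullet> X) + X \<bullet> r = 0"
    using Xk XV by (auto simp: inner_diff_right inner_add_right)
  have ww: "w \<bullet> w = \<gamma>\<^sup>2" using wn by (simp add: power2_norm_eq_inner[symmetric])
  have XX: "X \<bullet> X = \<gamma>\<^sup>2" using Xn by (simp add: power2_norm_eq_inner[symmetric])
  have sXw: "X \<bullet> (M *v w) = w \<bullet> (M *v X)" using sym by blast
  have ident: "(w \<bullet> (M *v w) + 2 * (w \<bullet> r)) - (X \<bullet> (M *v X) + 2 * (X \<bullet> r)) = d \<bullet> (M *v d) - \<mu> * (d \<bullet> d)"
  proof -
    have "d \<bullet> (M *v d) = w \<bullet> (M *v w) - 2 * (w \<bullet> (M *v X)) + X \<bullet> (M *v X)"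
      unfolding d_def using sXw
      by (simp add: matrix_vector_mult_diff_distrib inner_diff_left inner_diff_right)
    moreover have "d \<bullet> d = w \<bullet> w - 2 * (w \<bullet> X) + X \<bullet> X"
      unfolding d_def by (simp add: inner_diff_left inner_diff_right inner_commute)
    then have dd2: "d \<bullet> d = 2 * \<gamma>\<^sup>2 - 2 * (w \<bullet> X)" using ww XX by linarith
    have "\<mu> * (d \<bullet> d) = 2 * (\<mu> * \<gamma>\<^sup>2) - 2 * (\<mu> * (w \<bullet> X))"
      unfolding dd2 by (simp add: algebra_simps)
    moreover have "X \<bullet> (M *v X) - \<mu> * \<gamma>\<^sup>2 + X \<bullet> r = 0" using k2 XX by simp
    ultimately show ?thesis using k1 \<open>d \<bullet> (M *v d) = _\<close> by linarith
  qed
  have "0 \<le> Q d" using second dV by blast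
  moreover have "\<mu> * (d \<bullet> d) \<le> lam * (d \<bullet> d)" using mu_le by (simp add: mult_right_mono)
  ultimately show ?thesis using ident unfolding Q_def by linarith
qed




lemma sym_to_transpose:
  fixes M :: "real^'n^'n"
  assumes "\<And>u v. u \<bullet> (M *v v) = (M *v u) \<bullet> v"
  shows "transpose M = M"
proof -
  have "transpose M *v u = M *v u" for u
  proof -
    have "(transpose M *v u - M *v u) \<bullet> v = 0" for v
      using dot_mv[of u M v] assms[of u v] by (simp add: inner_diff_left)
    from this[of "transpose M *v u - M *v u"] show ?thesis by simp
  qed
  then show ?thesis by (simp add: matrix_eq)
qed

lemma orth_span:
  assumes "\<forall>x\<in>S. x \<bullet> w = 0" and "z \<in> span S"
  shows "z \<bullet> (w::real^'n) = 0"
  using assms(2)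
proof (induction rule: span_induct_alt)
  show "0 \<bullet> w = 0" by simp
next
  fix c x y assume "x \<in> S" "y \<bullet> w = 0"
  then show "(c *\<^sub>R x + y) \<bullet> w = 0" using assms(1) by (simp add: inner_add_left)
qed

context
  fixes M :: "real^'n^'n" and r :: "real^'n" and k :: nat
  assumes symM: "transpose M = M" and nz: "\<forall>j. 1 \<le> j \<and> j \<le> k \<longrightarrow> lbeta M r j \<noteq> 0"
begin

lemma on: "i \<in> {1..k} \<Longrightarrow> j \<in> {1..k} \<Longrightarrow> lq M r i \<bullet> lq M r j = (if i = j then 1 else 0)"
  using orthonormal[OF symM nz] by auto

lemma Qmul_dot: "i \<in> {1..k} \<Longrightarrow> Qmul M r k c \<bullet> lq M r i = c i"
proof -
  assume i: "i \<in> {1..k}"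
  have "Qmul M r k c \<bullet> lq M r i = (\<Sum>j=1..k. c j * (lq M r j \<bullet> lq M r i))"
    unfolding Qmul_def by (simp add: inner_sum_left)
  also have "\<dots> = (\<Sum>j=1..k. if j = i then c j else 0)"
    using on i by (intro sum.cong) auto
  also have "\<dots> = c i" using i by simp
  finally show ?thesis .
qed

lemma Qmul_self: "Qmul M r k c \<bullet> Qmul M r k c = (\<Sum>j=1..k. (c j)\<^sup>2)"
proof -
  have "Qmul M r k c \<bullet> Qmul M r k c = (\<Sum>j=1..k. c j * (Qmul M r k c \<bullet> lq M r j))"
    by (subst (2) Qmul_def) (simp add: inner_sum_right)
  also have "\<dots> = (\<Sum>j=1..k. (c j)\<^sup>2)"
    using Qmul_dot by (intro sum.cong) (auto simp: power2_eq_square)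
  finally show ?thesis .
qed

lemma Qmul_in: "Qmul M r k c \<in> span (lq M r ` {1..k})"
  unfolding Qmul_def by (intro span_sum span_scale span_base) auto

lemma Qmul_M: "i \<in> {1..k} \<Longrightarrow> lq M r i \<bullet> (M *v Qmul M r k c) = (\<Sum>j=1..k. Tent M r i j * c j)"
  unfolding Qmul_def Tent_def
  by (simp add: vec.sum matrix_vector_mult_scaleR inner_sum_right mult.commute)

lemma expand: "y \<in> span (lq M r ` {1..k}) \<Longrightarrow> Qmul M r k (\<lambda>j. y \<bullet> lq M r j) = y"
  unfolding Qmul_def
proof (induction rule: span_induct_alt)
  show "(\<Sum>j = 1..k. (0 \<bullet> lq M r j) *\<^sub>R lq M r j) = 0" by simp
next
  fix c x y assume x: "x \<in> lq M r ` {1..k}" and IH: "(\<Sum>j = 1..k. (y \<bullet> lq M r j) *\<^sub>R lq M r j) = y"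
  obtain i where i: "i \<in> {1..k}" "x = lq M r i" using x by auto
  have "(\<Sum>j = 1..k. (x \<bullet> lq M r j) *\<^sub>R lq M r j) = (\<Sum>j = 1..k. if i = j then lq M r j else 0)"
    using on i by (intro sum.cong) auto
  also have "\<dots> = x" using i by simp
  finally have hx: "(\<Sum>j = 1..k. (x \<bullet> lq M r j) *\<^sub>R lq M r j) = x" .
  have "(\<Sum>j = 1..k. ((c *\<^sub>R x + y) \<bullet> lq M r j) *\<^sub>R lq M r j)
      = c *\<^sub>R (\<Sum>j = 1..k. (x \<bullet> lq M r j) *\<^sub>R lq M r j) + (\<Sum>j = 1..k. (y \<bullet> lq M r j) *\<^sub>R lq M r j)"
    by (simp add: inner_add_left scaleR_add_left sum.distrib scaleR_sum_right)
  then show "(\<Sum>j = 1..k. ((c *\<^sub>R x + y) \<bullet> lq M r j) *\<^sub>R lq M r j) = c *\<^sub>R x + y"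
    using hx IH by simp
qed

lemma q_r: "1 \<le> k \<Longrightarrow> i \<in> {1..k} \<Longrightarrow> lq M r i \<bullet> r = norm r * (if i = 1 then 1 else 0)"
proof -
  assume k: "1 \<le> k" and i: "i \<in> {1..k}"
  have "r = norm r *\<^sub>R lq M r 1" using rec0[of M r] b1[of M r] by simp
  then have "lq M r i \<bullet> r = norm r * (lq M r i \<bullet> lq M r 1)" by (metis inner_scaleR_right)
  also have "\<dots> = norm r * (if i = 1 then 1 else 0)" using on[OF i, of 1] k by simp
  finally show ?thesis .
qed

lemma T1:
  assumes k: "1 \<le> k" and f: "rLG_feasible M r g k lam c"
  shows "Qmul M r k c \<in> span (lq M r ` {1..k}) \<and> norm (Qmul M r k c) = g
    \<and> (\<forall>z\<in>span (lq M r ` {1..k}). z \<bullet> (M *v Qmul M r k c - lam *\<^sub>R Qmul M r k c + r) = 0)"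
proof (intro conjI)
  show "Qmul M r k c \<in> span (lq M r ` {1..k})" by (rule Qmul_in)
  show "norm (Qmul M r k c) = g"
    using f Qmul_self[of c] by (simp add: rLG_feasible_def norm_eq_sqrt_inner)
  show "\<forall>z\<in>span (lq M r ` {1..k}). z \<bullet> (M *v Qmul M r k c - lam *\<^sub>R Qmul M r k c + r) = 0"
  proof
    fix z assume z: "z \<in> span (lq M r ` {1..k})"
    have "\<forall>x\<in>lq M r ` {1..k}. x \<bullet> (M *v Qmul M r k c - lam *\<^sub>R Qmul M r k c + r) = 0"
    proof
      fix x assume "x \<in> lq M r ` {1..k}"
      then obtain i where i: "i \<in> {1..k}" "x = lq M r i" by auto
      have "x \<bullet> (M *v Qmul M r k c - lam *\<^sub>R Qmul M r k c + r)
          = (\<Sum>j=1..k. Tent M r i j * c j) - lam * c i + norm r * (if i = 1 then 1 else 0)"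
        using i Qmul_M[of i c] Qmul_dot[of i c] q_r[OF k i(1)]
        by (simp add: inner_diff_right inner_add_right inner_commute)
      also have "\<dots> = 0" using f i by (simp add: rLG_feasible_def)
      finally show "x \<bullet> (M *v Qmul M r k c - lam *\<^sub>R Qmul M r k c + r) = 0" .
    qed
    then show "z \<bullet> (M *v Qmul M r k c - lam *\<^sub>R Qmul M r k c + r) = 0"
      using orth_span z by blast
  qed
qed

lemma T2:
  assumes k: "1 \<le> k" and y: "y \<in> span (lq M r ` {1..k})" and yn: "norm y = g"
    and o: "\<forall>z\<in>span (lq M r ` {1..k}). z \<bullet> (M *v y - lam *\<^sub>R y + r) = 0"
  shows "rLG_feasible M r g k lam (\<lambda>j. y \<bullet> lq M r j)"
  unfolding rLG_feasible_def
proof (intro conjI ballI)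
  let ?c = "\<lambda>j. y \<bullet> lq M r j"
  have e: "Qmul M r k ?c = y" using expand[OF y] .
  fix i assume i: "i \<in> {1..k}"
  have "lq M r i \<in> span (lq M r ` {1..k})" using i by (intro span_base) auto
  then have "lq M r i \<bullet> (M *v y - lam *\<^sub>R y + r) = 0" using o by blast
  then have "(\<Sum>j=1..k. Tent M r i j * ?c j) - lam * ?c i + norm r * (if i = 1 then 1 else 0) = 0"
    using Qmul_M[of i ?c] q_r[OF k i] i unfolding e
    by (simp add: inner_diff_right inner_add_right inner_commute)
  then show "(\<Sum>j=1..k. Tent M r i j * ?c j) - lam * ?c i = - norm r * (if i = 1 then 1 else 0)"
    by simp
next
  let ?c = "\<lambda>j. y \<bullet> lq M r j"
  have e: "Qmul M r k ?c = y" using expand[OF y] .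
  show "sqrt (\<Sum>j = 1..k. (?c j)\<^sup>2) = g"
    using Qmul_self[of ?c] yn unfolding e by (simp add: norm_eq_sqrt_inner)
qed

end




theorem theorem4p1:
  fixes A :: "real^'n^'n" and C :: "real^'m^'n" and b :: "real^'m"
    and k :: nat and \<mu> :: real and x :: "nat \<Rightarrow> real"
  assumes symA: "transpose A = A"
    and mn: "CARD('m) < CARD('n)"
    and rankC: "rank C = CARD('m)"
    and n0_lt: "norm (n0vec C b) < 1"
    and b0_nz: "b0vec A C b \<noteq> 0"
    and k_pos: "1 \<le> k"
    and k_le: "k \<le> kmax (projP C ** A ** projP C) (b0vec A C b)"
    and minim: "rLG_minimizer (projP C ** A ** projP C) (b0vec A C b) (gam C b) k \<mu> x"
  shows "let M = projP C ** A ** projP C; r = b0vec A C b;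
             v = n0vec C b + Qmul M r k x;
             S = {w. w \<in> (\<lambda>y. n0vec C b + y) ` krylov M r k \<and> norm w = 1}
         in hq A v \<in> hq A ` S \<and> (\<forall>w\<in>S. hq A v \<le> hq A w)"
proof -
  interpret PC C A b using rankC symA by unfold_locales
  define P where "P = projP C"
  define M where "M = projP C ** A ** projP C"
  define r where "r = b0vec A C b"
  define n0 where "n0 = n0vec C b"
  define \<gamma> where "\<gamma> = gam C b"
  define V where "V = span (lq M r ` {1..k})"
  have Mapp: "M *v v = P *v (A *v (P *v v))" for v
    unfolding M_def P_def by (simp add: matrix_vector_mul_assoc matrix_mul_assoc)
  have rdef: "r = P *v (A *v n0)" unfolding r_def P_def n0_def b0vec_def by simp
  have symM: "transpose M = M"
  proof (rule sym_to_transpose)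
    fix u v
    have "u \<bullet> (M *v v) = (P *v u) \<bullet> (A *v (P *v v))" unfolding Mapp P_def by (rule Psym)
    also have "\<dots> = (A *v (P *v u)) \<bullet> (P *v v)" by (rule Asym)
    also have "\<dots> = (P *v (A *v (P *v u))) \<bullet> v"
      using Psym[of "A *v (P *v u)" v] unfolding P_def by (simp add: inner_commute)
    finally show "u \<bullet> (M *v v) = (M *v u) \<bullet> v" unfolding Mapp .
  qed
  have nz: "\<forall>j. 1 \<le> j \<and> j \<le> k \<longrightarrow> lbeta M r j \<noteq> 0"
  proof (intro allI impI)
    fix j assume j: "1 \<le> j \<and> j \<le> k"
    then obtain i where ij: "j = Suc i" by (cases j) auto
    have "i < kmax M r" using j ij k_le unfolding M_def r_def by simp
    then have "\<not> lbeta M r (Suc i) = 0" unfolding kmax_def by (rule not_less_Least)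
    then show "lbeta M r j \<noteq> 0" using ij by simp
  qed
  have Vk: "krylov M r k = V" unfolding V_def by (rule krylov_eq)
  have subV: "subspace V" unfolding V_def by (rule subspace_span)
  have Psub: "subspace {y. P *v y = y}"
    unfolding subspace_def
    by (simp add: matrix_vector_right_distrib matrix_vector_mult_scaleR)
  have PV: "P *v y = y" if "y \<in> V" for y
  proof -
    have "krylov M r k \<subseteq> {y. P *v y = y}"
      unfolding krylov_def
    proof (rule span_minimal[OF _ Psub])
      show "(\<lambda>j. ((*v) M ^^ j) r) ` {..<k} \<subseteq> {y. P *v y = y}"
      proof
        fix z assume "z \<in> (\<lambda>j. ((*v) M ^^ j) r) ` {..<k}"
        then obtain i where zi: "z = ((*v) M ^^ i) r" by auto
        show "z \<in> {y. P *v y = y}"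
        proof (cases i)
          case 0 then show ?thesis using zi rdef PP unfolding P_def by simp
        next
          case (Suc i') then show ?thesis using zi PP unfolding Mapp P_def by simp
        qed
      qed
    qed
    then show ?thesis using that Vk by blast
  qed
  have yn0: "y \<bullet> n0 = 0" if "y \<in> V" for y
  proof -
    have "y \<bullet> n0 = (P *v y) \<bullet> n0" using PV that by simp
    also have "\<dots> = y \<bullet> (P *v n0)" unfolding P_def by (rule Psym[symmetric])
    also have "\<dots> = 0" unfolding P_def n0_def by (simp add: Pn0)
    finally show ?thesis .
  qed
  have yr: "y \<bullet> (A *v n0) = y \<bullet> r" if "y \<in> V" for y
  proof -
    have "y \<bullet> (A *v n0) = (P *v y) \<bullet> (A *v n0)" using PV that by simp
    also have "\<dots> = y \<bullet> r" unfolding rdef P_def by (rule Psym[symmetric])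
    finally show ?thesis .
  qed
  have yM: "y \<bullet> (A *v y) = y \<bullet> (M *v y)" if "y \<in> V" for y
  proof -
    have "y \<bullet> (A *v y) = (P *v y) \<bullet> (A *v (P *v y))" using PV that by simp
    also have "\<dots> = y \<bullet> (P *v (A *v (P *v y)))" unfolding P_def by (rule Psym[symmetric])
    finally show ?thesis unfolding Mapp .
  qed
  have hq_exp: "hq A (n0 + y) = hq A n0 + (y \<bullet> (M *v y) + 2 * (y \<bullet> r))" if "y \<in> V" for y
  proof -
    have "n0 \<bullet> (A *v y) = y \<bullet> (A *v n0)" using Asym[of n0 y] by (simp add: inner_commute)
    then show ?thesis unfolding hq_def using yr[OF that] yM[OF that]
      by (simp add: matrix_vector_right_distrib inner_add_left inner_add_right)
  qed
  have nn: "norm n0 ^ 2 < 1" using n0_lt unfolding n0_def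
    by (metis abs_norm_cancel abs_square_less_1)
  have gpos: "\<gamma> > 0" unfolding \<gamma>_def gam_def using nn n0_def by simp
  have g2: "\<gamma>\<^sup>2 = 1 - n0 \<bullet> n0" unfolding \<gamma>_def gam_def n0_def
    using nn n0_def by (simp add: power2_norm_eq_inner[symmetric])
  have nsum: "(n0 + y) \<bullet> (n0 + y) = n0 \<bullet> n0 + y \<bullet> y" if "y \<in> V" for y
    using yn0[OF that] by (simp add: inner_add_left inner_add_right inner_commute)
  define X where "X = Qmul M r k x"
  have feas: "rLG_feasible M r \<gamma> k \<mu> x" and minl0: "\<forall>lam y. rLG_feasible M r \<gamma> k lam y \<longrightarrow> \<mu> \<le> lam"
    using minim unfolding rLG_minimizer_def M_def r_def \<gamma>_def by auto
  have XT: "X \<in> V \<and> norm X = \<gamma> \<and> (\<forall>z\<in>V. z \<bullet> (M *v X - \<mu> *\<^sub>R X + r) = 0)"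
    using T1[OF symM nz k_pos feas] unfolding X_def V_def .
  have minl: "\<forall>lam y. y \<in> V \<and> norm y = \<gamma> \<and> (\<forall>z\<in>V. z \<bullet> (M *v y - lam *\<^sub>R y + r) = 0) \<longrightarrow> \<mu> \<le> lam"
  proof (intro allI impI)
    fix lam y assume h: "y \<in> V \<and> norm y = \<gamma> \<and> (\<forall>z\<in>V. z \<bullet> (M *v y - lam *\<^sub>R y + r) = 0)"
    then have "rLG_feasible M r \<gamma> k lam (\<lambda>j. y \<bullet> lq M r j)"
      using T2[OF symM nz k_pos, of y \<gamma> lam] unfolding V_def by blast
    then show "\<mu> \<le> lam" using minl0 by blast
  qed
  have main: "X \<bullet> (M *v X) + 2 * (X \<bullet> r) \<le> w \<bullet> (M *v w) + 2 * (w \<bullet> r)" if "w \<in> V" "norm w = \<gamma>" for w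
    using trs_main[OF subV symM gpos _ _ _ minl that] XT by blast
  define S where "S = {w. w \<in> (\<lambda>y. n0 + y) ` krylov M r k \<and> norm w = 1}"
  have vS: "n0 + X \<in> S"
  proof -
    have "(n0 + X) \<bullet> (n0 + X) = 1\<^sup>2" using nsum[of X] XT g2
      by (simp add: power2_norm_eq_inner[symmetric])
    then have "norm (n0 + X) = 1" by (intro norm_from_inner) auto
    then show ?thesis unfolding S_def using XT Vk by auto
  qed
  have allS: "\<forall>w\<in>S. hq A (n0 + X) \<le> hq A w"
  proof
    fix w assume "w \<in> S"
    then obtain y where y: "y \<in> V" "w = n0 + y" "norm w = 1" unfolding S_def using Vk by auto
    have "1 = (n0 + y) \<bullet> (n0 + y)" using y by (simp add: power2_norm_eq_inner[symmetric])
    then have "y \<bullet> y = \<gamma>\<^sup>2" using nsum[OF y(1)] g2 by simp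
    then have "norm y = \<gamma>" using gpos by (intro norm_from_inner) auto
    then have "X \<bullet> (M *v X) + 2 * (X \<bullet> r) \<le> y \<bullet> (M *v y) + 2 * (y \<bullet> r)" using main y by blast
    then show "hq A (n0 + X) \<le> hq A w" using hq_exp[of X] hq_exp[OF y(1)] XT y by simp
  qed
  show ?thesis
    unfolding Let_def
    using vS allS unfolding S_def X_def n0_def M_def r_def by blast
qed



end
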